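(* Let $f$ be a biderivation of $\mathcal{SV}(0)$, and let $\phi,\psi:\mathcal{SV}(0)\to\mathcal{SV}(0)$ be linear maps and $\rho_1,\rho_2,\rho_3,\theta_1,\theta_2,\theta_3$ linear complex-valued functions on $\mathcal{SV}(0)$ such that for all $x,y$, $$f(x,y)=\sum_{i=1}^3\rho_i(x)D_i(y)+[\phi(x),y]=\sum_{i=1}^3\theta_i(y)D_i(x)+[x,\psi(y)].$$ Let $\lambda\in\mathbb{C}$ be such that $\phi(L_m)-\lambda L_m\in\mathfrak{M}$ and $\psi(L_m)-\lambda L_m\in\mathfrak{M}$ for all $m\in\mathbb{Z}$ (such $\lambda$ exists). Then for every $n\in\mathbb{Z}$ there are $c_0^{(n)},r_0^{(n)}\in\mathbb{C}$ with $$\phi(Y_n)=\lambda Y_n+c_0^{(n)}M_0,\qquad \psi(Y_n)=\lambda Y_n+r_0^{(n)}M_0,$$ and moreover $\rho_i(Y_n)=\theta_i(Y_n)=0$ for $i=1,2,3$ and $\rho_3(L_n)=\theta_3(L_n)=0$, for all $n\in\mathbb{Z}$.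
   Context: $\mathcal{SV}(0)$ is the complex Lie algebra with basis $\{L_i,Y_i,M_i\mid i\in\mathbb{Z}\}$ and brackets $[L_m,L_n]=(m-n)L_{m+n}$, $[L_m,Y_n]=(\frac12 m-n)Y_{m+n}$, $[L_m,M_n]=-nM_{m+n}$, $[Y_m,Y_n]=(m-n)M_{m+n}$, $[Y_m,M_n]=[M_m,M_n]=0$; $\mathfrak{M}=\bigoplus_{i\in\mathbb{Z}}\mathbb{C}M_i$. A biderivation of a Lie algebra $L$ is a bilinear map $f:L\times L\to L$ with $f([x,y],z)=[x,f(y,z)]+[f(x,z),y]$ and $f(x,[y,z])=[f(x,y),z]+[y,f(x,z)]$ for all $x,y,z\in L$. The linear maps $D_1,D_2,D_3$ are defined by $D_1(L_m)=M_m$, $D_1(Y_m)=D_1(M_m)=0$; $D_2(L_m)=mM_m$, $D_2(Y_m)=D_2(M_m)=0$; $D_3(L_m)=0$, $D_3(Y_m)=Y_m$, $D_3(M_m)=2M_m$. *)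

theory Defs
  imports Complex_Main
begin

text \<open>The Lie algebra SV(0): elements are finitely supported complex coefficient
 functions on the basis {L_i, Y_i, M_i | i \<in> Z}.\<close>

datatype gen = L int | Y int | M int

type_synonym sv = "gen \<Rightarrow> complex"

definition SV :: "sv set" where
  "SV = {x. finite {g. x g \<noteq> 0}}"

definition vadd :: "sv \<Rightarrow> sv \<Rightarrow> sv" where
  "vadd x y = (\<lambda>g. x g + y g)"

definition vsc :: "complex \<Rightarrow> sv \<Rightarrow> sv" where
  "vsc c x = (\<lambda>g. c * x g)"

definition vzero :: sv where
  "vzero = (\<lambda>g. 0)"

definition bas :: "gen \<Rightarrow> sv" where
  "bas g = (\<lambda>h. if h = g then 1 else 0)"

fun brb :: "gen \<Rightarrow> gen \<Rightarrow> sv" where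
  "brb (L m) (L n) = vsc (of_int (m - n)) (bas (L (m + n)))"
| "brb (L m) (Y n) = vsc (of_int m / 2 - of_int n) (bas (Y (m + n)))"
| "brb (L m) (M n) = vsc (- of_int n) (bas (M (m + n)))"
| "brb (Y m) (L n) = vsc (of_int m - of_int n / 2) (bas (Y (m + n)))"
| "brb (Y m) (Y n) = vsc (of_int (m - n)) (bas (M (m + n)))"
| "brb (Y m) (M n) = vzero"
| "brb (M m) (L n) = vsc (of_int m) (bas (M (m + n)))"
| "brb (M m) (Y n) = vzero"
| "brb (M m) (M n) = vzero"

definition br :: "sv \<Rightarrow> sv \<Rightarrow> sv" where
  "br x y = (\<lambda>g. \<Sum>a\<in>{a. x a \<noteq> 0}. \<Sum>b\<in>{b. y b \<noteq> 0}. x a * y b * brb a b g)"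

definition Mfrak :: "sv set" where
  "Mfrak = {x \<in> SV. \<forall>m. x (L m) = 0 \<and> x (Y m) = 0}"

definition lin_map :: "(sv \<Rightarrow> sv) \<Rightarrow> bool" where
  "lin_map \<phi> \<longleftrightarrow> (\<forall>x\<in>SV. \<phi> x \<in> SV) \<and>
     (\<forall>x\<in>SV. \<forall>y\<in>SV. \<phi> (vadd x y) = vadd (\<phi> x) (\<phi> y)) \<and>
     (\<forall>c. \<forall>x\<in>SV. \<phi> (vsc c x) = vsc c (\<phi> x))"

definition lin_fun :: "(sv \<Rightarrow> complex) \<Rightarrow> bool" where
  "lin_fun \<rho> \<longleftrightarrow>
     (\<forall>x\<in>SV. \<forall>y\<in>SV. \<rho> (vadd x y) = \<rho> x + \<rho> y) \<and>
     (\<forall>c. \<forall>x\<in>SV. \<rho> (vsc c x) = c * \<rho> x)"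

definition bilin_map :: "(sv \<Rightarrow> sv \<Rightarrow> sv) \<Rightarrow> bool" where
  "bilin_map f \<longleftrightarrow> (\<forall>x\<in>SV. lin_map (f x)) \<and> (\<forall>y\<in>SV. lin_map (\<lambda>x. f x y))"

definition biderivation :: "(sv \<Rightarrow> sv \<Rightarrow> sv) \<Rightarrow> bool" where
  "biderivation f \<longleftrightarrow> bilin_map f \<and>
     (\<forall>x\<in>SV. \<forall>y\<in>SV. \<forall>z\<in>SV.
        f (br x y) z = vadd (br x (f y z)) (br (f x z) y) \<and>
        f x (br y z) = vadd (br (f x y) z) (br y (f x z)))"

definition D1 :: "sv \<Rightarrow> sv" where
  "D1 x = (\<lambda>g. case g of M m \<Rightarrow> x (L m) | _ \<Rightarrow> 0)"

definition D2 :: "sv \<Rightarrow> sv" where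
  "D2 x = (\<lambda>g. case g of M m \<Rightarrow> of_int m * x (L m) | _ \<Rightarrow> 0)"

definition D3 :: "sv \<Rightarrow> sv" where
  "D3 x = (\<lambda>g. case g of L m \<Rightarrow> 0 | Y m \<Rightarrow> x (Y m) | M m \<Rightarrow> 2 * x (M m))"

end

theory Submission
  imports Defs
begin

lemma bas_SV[simp]: "bas g \<in> SV"
proof -
  have "{h. bas g h \<noteq> 0} = {g}" by (auto simp: bas_def)
  thus ?thesis by (simp add: SV_def)
qed

lemma supp_bas: "{h. bas g h \<noteq> 0} = {g}" by (auto simp: bas_def)

lemma sum_single:
  assumes "y \<in> SV" "\<And>b. b \<noteq> zz \<Longrightarrow> y b * h b = 0"
  shows "(\<Sum>b\<in>{b. y b \<noteq> 0}. y b * h b) = y zz * h zz"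
proof -
  have fin: "finite {b. y b \<noteq> 0}" using assms(1) by (simp add: SV_def)
  have "(\<Sum>b\<in>{b. y b \<noteq> 0}. y b * h b) = (\<Sum>b\<in>{b. y b \<noteq> 0}. if b = zz then y zz * h zz else 0)"
    by (rule sum.cong) (auto simp: assms(2))
  also have "\<dots> = (if zz \<in> {b. y b \<noteq> 0} then y zz * h zz else 0)"
    using fin by (simp add: sum.delta')
  also have "\<dots> = y zz * h zz" by auto
  finally show ?thesis .
qed

lemma br_left: "y \<in> SV \<Longrightarrow> br (bas a) y g = (\<Sum>b\<in>{b. y b \<noteq> 0}. y b * brb a b g)"
  by (simp add: br_def supp_bas, simp add: bas_def)

lemma br_right: "x \<in> SV \<Longrightarrow> br x (bas b) g = (\<Sum>a\<in>{a. x a \<noteq> 0}. x a * brb a b g)"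
  by (simp add: br_def supp_bas, simp add: bas_def)

lemmas bdefs = bas_def vsc_def vzero_def

lemma brLl: "y \<in> SV \<Longrightarrow> br (bas (L m)) y (L j) = of_int (m - (j - m)) * y (L (j - m))"
  apply (simp add: br_left)
  apply (subst sum_single[where zz="L (j-m)"], assumption)
  apply (case_tac b; auto simp: bdefs)
  apply (auto simp: bdefs mult.commute)
  done
lemma brLy: "y \<in> SV \<Longrightarrow> br (bas (L m)) y (Y j) = (of_int m / 2 - of_int (j - m)) * y (Y (j - m))"
  apply (simp add: br_left)
  apply (subst sum_single[where zz="Y (j-m)"], assumption)
  apply (case_tac b; auto simp: bdefs)
  apply (auto simp: bdefs mult.commute)
  done
lemma brLm: "y \<in> SV \<Longrightarrow> br (bas (L m)) y (M j) = - of_int (j - m) * y (M (j - m))"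
  apply (simp add: br_left)
  apply (subst sum_single[where zz="M (j-m)"], assumption)
  apply (case_tac b; auto simp: bdefs)
  apply (auto simp: bdefs mult.commute)
  done
lemma brYl: "y \<in> SV \<Longrightarrow> br (bas (Y m)) y (L j) = 0"
  apply (simp add: br_left)
  apply (subst sum_single[where zz="L (j-m)"], assumption)
  apply (case_tac b; auto simp: bdefs)
  apply (auto simp: bdefs mult.commute)
  done
lemma brYy: "y \<in> SV \<Longrightarrow> br (bas (Y m)) y (Y j) = (of_int m - of_int (j - m) / 2) * y (L (j - m))"
  apply (simp add: br_left)
  apply (subst sum_single[where zz="L (j-m)"], assumption)
  apply (case_tac b; auto simp: bdefs)
  apply (auto simp: bdefs mult.commute)
  done
lemma brYm: "y \<in> SV \<Longrightarrow> br (bas (Y m)) y (M j) = of_int (m - (j - m)) * y (Y (j - m))"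
  apply (simp add: br_left)
  apply (subst sum_single[where zz="Y (j-m)"], assumption)
  apply (case_tac b; auto simp: bdefs)
  apply (auto simp: bdefs mult.commute)
  done
lemma brlL: "x \<in> SV \<Longrightarrow> br x (bas (L m)) (L j) = of_int ((j - m) - m) * x (L (j - m))"
  apply (simp add: br_right)
  apply (subst sum_single[where zz="L (j-m)"], assumption)
  apply (case_tac b; auto simp: bdefs)
  apply (auto simp: bdefs mult.commute)
  done
lemma brlY: "x \<in> SV \<Longrightarrow> br x (bas (L m)) (Y j) = (of_int (j - m) - of_int m / 2) * x (Y (j - m))"
  apply (simp add: br_right)
  apply (subst sum_single[where zz="Y (j-m)"], assumption)
  apply (case_tac b; auto simp: bdefs)
  apply (auto simp: bdefs mult.commute)
  done
lemma brlM: "x \<in> SV \<Longrightarrow> br x (bas (L m)) (M j) = of_int (j - m) * x (M (j - m))"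
  apply (simp add: br_right)
  apply (subst sum_single[where zz="M (j-m)"], assumption)
  apply (case_tac b; auto simp: bdefs)
  apply (auto simp: bdefs mult.commute)
  done
lemma bryL: "x \<in> SV \<Longrightarrow> br x (bas (Y n)) (L j) = 0"
  apply (simp add: br_right)
  apply (subst sum_single[where zz="L (j-n)"], assumption)
  apply (case_tac b; auto simp: bdefs)
  apply (auto simp: bdefs mult.commute)
  done
lemma bryY: "x \<in> SV \<Longrightarrow> br x (bas (Y n)) (Y j) = (of_int (j - n) / 2 - of_int n) * x (L (j - n))"
  apply (simp add: br_right)
  apply (subst sum_single[where zz="L (j-n)"], assumption)
  apply (case_tac b; auto simp: bdefs)
  apply (auto simp: bdefs mult.commute)
  done
lemma bryM: "x \<in> SV \<Longrightarrow> br x (bas (Y n)) (M j) = of_int ((j - n) - n) * x (Y (j - n))"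
  apply (simp add: br_right)
  apply (subst sum_single[where zz="Y (j-n)"], assumption)
  apply (case_tac b; auto simp: bdefs)
  apply (auto simp: bdefs mult.commute)
  done

lemma half_sub: "(of_int a / 2 - of_int b :: complex) = of_int (a - 2*b) / 2"
  by (simp add: field_simps)
lemma sub_half: "(of_int a - of_int b / 2 :: complex) = of_int (2*a - b) / 2"
  by (simp add: field_simps)

lemma of_int_2eq: "(of_int m = 2 * (of_int k :: complex)) = (m = 2*k)"
proof -
  have "2 * (of_int k :: complex) = of_int (2*k)" by simp
  thus ?thesis by (simp only: of_int_eq_iff)
qed
lemma of_int_2eq': "(2 * (of_int k :: complex) = of_int m) = (2*k = m)"
  using of_int_2eq[of m k] by auto

lemma Dsimps:
  "D1 (bas (Y n)) g = 0" "D2 (bas (Y n)) g = 0" "D3 (bas (L n)) g = 0"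
  "D1 (bas (L m)) (L j) = 0" "D1 (bas (L m)) (Y j) = 0" "D1 (bas (L m)) (M j) = (if j = m then 1 else 0)"
  "D2 (bas (L m)) (L j) = 0" "D2 (bas (L m)) (Y j) = 0" "D2 (bas (L m)) (M j) = (if j = m then of_int m else 0)"
  "D3 (bas (Y m)) (L j) = 0" "D3 (bas (Y m)) (Y j) = (if j = m then 1 else 0)" "D3 (bas (Y m)) (M j) = 0"
  by (auto simp: D1_def D2_def D3_def bas_def split: gen.split)

lemma partA:
  fixes p q :: "sv \<Rightarrow> sv" and r1 r2 r3 t1 t2 t3 :: "sv \<Rightarrow> complex"
  assumes E: "\<And>x y g. x\<in>SV \<Longrightarrow> y\<in>SV \<Longrightarrow> r1 x * D1 y g + r2 x * D2 y g + r3 x * D3 y g + br (p x) y g = t1 y * D1 x g + t2 y * D2 x g + t3 y * D3 x g + br x (q y) g"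
    and pSV: "\<And>x. x\<in>SV \<Longrightarrow> p x \<in> SV" and qSV: "\<And>x. x\<in>SV \<Longrightarrow> q x \<in> SV"
    and uL: "\<And>m k. p (bas (L m)) (L k) = (if k = m then lam else 0)"
    and uY: "\<And>m k. p (bas (L m)) (Y k) = 0"
  shows "q (bas (Y n)) = vadd (vsc lam (bas (Y n))) (vsc (q (bas (Y n)) (M 0)) (bas (M 0)))
     \<and> t1 (bas (Y n)) = 0 \<and> t2 (bas (Y n)) = 0 \<and> (\<forall>m. r3 (bas (L m)) = 0)"
proof -
  define w where "w = q (bas (Y n))"
  have wSV: "w \<in> SV" using qSV w_def by simp
  have EL: "0 = of_int (2*m - j) * w (L (j - m))" for m j
    using E[of "bas (L m)" "bas (Y n)" "L j"] wSV
    by (simp add: Dsimps brLl bryL pSV w_def)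
  have EY: "r3 (bas (L m)) * (if j = n then 1 else 0) + (of_int (j - n) / 2 - of_int n) * (if j - n = m then lam else 0)
      = (of_int m / 2 - of_int (j - m)) * w (Y (j - m))" for m j
    using E[of "bas (L m)" "bas (Y n)" "Y j"] wSV
    by (simp add: Dsimps brLy bryY pSV w_def uL)
  have EM: "t1 (bas (Y n)) * (if j = m then 1 else 0) + t2 (bas (Y n)) * (if j = m then of_int m else 0)
      + (of_int m - of_int j) * w (M (j - m)) = 0" for m j
    using E[of "bas (L m)" "bas (Y n)" "M j"] wSV
    by (simp add: Dsimps brLm bryM pSV w_def uY del: mult_eq_0_iff)
  have wL: "w (L k) = 0" for k
    using EL[of "k+1" "2*k+1"] by simp
  have wY: "w (Y k) = 0" if "k \<noteq> n" for k
  proof -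
    define m where "m = \<bar>n - k\<bar> + 2*\<bar>k\<bar> + 1"
    have "m + k \<noteq> n" "m - 2*k \<noteq> 0" "m \<noteq> 0" unfolding m_def by arith+
    with EY[of m "m+k"] that show ?thesis by (simp add: half_sub of_int_2eq of_int_2eq')
  qed
  have wYn: "w (Y n) = lam"
  proof -
    define m where "m = 2*\<bar>n\<bar> + 1"
    have "m - 2*n \<noteq> 0" "m \<noteq> 0" unfolding m_def by arith+
    with EY[of m "m+n"] show ?thesis by (simp add: half_sub of_int_2eq of_int_2eq')
  qed
  have wM: "w (M k) = 0" if "k \<noteq> 0" for k
    using EM[where m=0 and j=k] that by simp
  have t1: "t1 (bas (Y n)) = 0" using EM[where m=0 and j=0] by simp
  have t2: "t2 (bas (Y n)) = 0" using EM[where m=1 and j=1] t1 by simp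
  have r3: "r3 (bas (L m)) = 0" for m
    using EY[of m n] wY[of "n - m"] wYn by (cases "m = 0") (auto simp: half_sub)
  have "w = vadd (vsc lam (bas (Y n))) (vsc (w (M 0)) (bas (M 0)))"
  proof
    fix g show "w g = vadd (vsc lam (bas (Y n))) (vsc (w (M 0)) (bas (M 0))) g"
      by (cases g) (auto simp: vadd_def bdefs wL wY wYn wM)
  qed
  thus ?thesis using t1 t2 r3 w_def by simp
qed

lemma partB:
  fixes p q :: "sv \<Rightarrow> sv" and r1 r2 r3 t1 t2 t3 :: "sv \<Rightarrow> complex"
  assumes E: "\<And>x y g. x\<in>SV \<Longrightarrow> y\<in>SV \<Longrightarrow> r1 x * D1 y g + r2 x * D2 y g + r3 x * D3 y g + br (p x) y g = t1 y * D1 x g + t2 y * D2 x g + t3 y * D3 x g + br x (q y) g"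
    and pSV: "\<And>x. x\<in>SV \<Longrightarrow> p x \<in> SV" and qSV: "\<And>x. x\<in>SV \<Longrightarrow> q x \<in> SV"
    and uL: "\<And>m k. q (bas (L m)) (L k) = (if k = m then lam else 0)"
    and uY: "\<And>m k. q (bas (L m)) (Y k) = 0"
  shows "p (bas (Y n)) = vadd (vsc lam (bas (Y n))) (vsc (p (bas (Y n)) (M 0)) (bas (M 0)))
     \<and> r1 (bas (Y n)) = 0 \<and> r2 (bas (Y n)) = 0 \<and> (\<forall>m. t3 (bas (L m)) = 0)"
proof -
  define w where "w = p (bas (Y n))"
  have wSV: "w \<in> SV" using pSV w_def by simp
  have EL: "of_int (j - 2*m) * w (L (j - m)) = 0" for m j
    using E[of "bas (Y n)" "bas (L m)" "L j"] wSV
    by (simp add: Dsimps brlL brYl qSV w_def)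
  have EY: "(of_int (j - m) - of_int m / 2) * w (Y (j - m)) = 
     t3 (bas (L m)) * (if j = n then 1 else 0) + (of_int n - of_int (j - n) / 2) * (if j - n = m then lam else 0)" for m j
    using E[of "bas (Y n)" "bas (L m)" "Y j"] wSV
    by (simp add: Dsimps brlY brYy qSV w_def uL)
  have EM: "r1 (bas (Y n)) * (if j = m then 1 else 0) + r2 (bas (Y n)) * (if j = m then of_int m else 0)
      + (of_int j - of_int m) * w (M (j - m)) = 0" for m j
    using E[of "bas (Y n)" "bas (L m)" "M j"] wSV
    by (simp add: Dsimps brlM brYm qSV w_def uY del: mult_eq_0_iff)
  have wL: "w (L k) = 0" for k
    using EL[where m="k+1" and j="2*k+1"] by simp
  have wY: "w (Y k) = 0" if "k \<noteq> n" for k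
  proof -
    define m where "m = \<bar>n - k\<bar> + 2*\<bar>k\<bar> + 1"
    have "m + k \<noteq> n" "m - 2*k \<noteq> 0" "m \<noteq> 0" unfolding m_def by arith+
    with EY[where m=m and j="m+k"] that show ?thesis by (simp add: sub_half half_sub of_int_2eq of_int_2eq')
  qed
  have wYn: "w (Y n) = lam"
  proof -
    define m where "m = 2*\<bar>n\<bar> + 1"
    have "m - 2*n \<noteq> 0" "m \<noteq> 0" unfolding m_def by arith+
    with EY[where m=m and j="m+n"] show ?thesis by (simp add: sub_half half_sub of_int_2eq of_int_2eq')
  qed
  have wM: "w (M k) = 0" if "k \<noteq> 0" for k
    using EM[where m=0 and j=k] that by simp
  have t1: "r1 (bas (Y n)) = 0" using EM[where m=0 and j=0] by simp
  have t2: "r2 (bas (Y n)) = 0" using EM[where m=1 and j=1] t1 by simp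
  have r3: "t3 (bas (L m)) = 0" for m
    using EY[where m=m and j=n] wY[of "n - m"] wYn by (cases "m = 0") (auto simp: sub_half half_sub)
  have "w = vadd (vsc lam (bas (Y n))) (vsc (w (M 0)) (bas (M 0)))"
  proof
    fix g show "w g = vadd (vsc lam (bas (Y n))) (vsc (w (M 0)) (bas (M 0))) g"
      by (cases g) (auto simp: vadd_def bdefs wL wY wYn wM)
  qed
  thus ?thesis using t1 t2 r3 w_def by simp
qed

lemma partC:
  fixes p q :: "sv \<Rightarrow> sv" and r1 r2 r3 t1 t2 t3 :: "sv \<Rightarrow> complex"
  assumes E: "\<And>x y g. x\<in>SV \<Longrightarrow> y\<in>SV \<Longrightarrow> r1 x * D1 y g + r2 x * D2 y g + r3 x * D3 y g + br (p x) y g = t1 y * D1 x g + t2 y * D2 x g + t3 y * D3 x g + br x (q y) g"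
    and pSV: "\<And>x. x\<in>SV \<Longrightarrow> p x \<in> SV" and qSV: "\<And>x. x\<in>SV \<Longrightarrow> q x \<in> SV"
    and pL: "\<And>m k. p (bas (Y m)) (L k) = 0"
    and qL: "\<And>m k. q (bas (Y m)) (L k) = 0"
  shows "r3 (bas (Y n)) = 0 \<and> t3 (bas (Y n)) = 0"
proof -
  have 1: "r3 (bas (Y n)) = 0"
    using E[of "bas (Y n)" "bas (Y (n+1))" "Y (n+1)"]
    by (simp add: Dsimps bryY brYy pSV qSV pL qL)
  have 2: "t3 (bas (Y n)) = 0"
    using E[of "bas (Y (n+1))" "bas (Y n)" "Y (n+1)"]
    by (simp add: Dsimps bryY brYy pSV qSV pL qL)
  show ?thesis using 1 2 by simp
qed

theorem lemma3p3:
  fixes f :: "sv \<Rightarrow> sv \<Rightarrow> sv" and \<phi> \<psi> :: "sv \<Rightarrow> sv"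
    and \<rho>1 \<rho>2 \<rho>3 \<theta>1 \<theta>2 \<theta>3 :: "sv \<Rightarrow> complex" and lam :: complex
  assumes bider: "biderivation f"
    and lin: "lin_map \<phi>" "lin_map \<psi>"
    and linf: "lin_fun \<rho>1" "lin_fun \<rho>2" "lin_fun \<rho>3"
              "lin_fun \<theta>1" "lin_fun \<theta>2" "lin_fun \<theta>3"
    and eq1: "\<forall>x\<in>SV. \<forall>y\<in>SV. f x y =
        vadd (vadd (vadd (vsc (\<rho>1 x) (D1 y)) (vsc (\<rho>2 x) (D2 y))) (vsc (\<rho>3 x) (D3 y)))
             (br (\<phi> x) y)"
    and eq2: "\<forall>x\<in>SV. \<forall>y\<in>SV. f x y =
        vadd (vadd (vadd (vsc (\<theta>1 y) (D1 x)) (vsc (\<theta>2 y) (D2 x))) (vsc (\<theta>3 y) (D3 x)))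
             (br x (\<psi> y))"
    and lamh: "\<forall>m. vadd (\<phi> (bas (L m))) (vsc (- lam) (bas (L m))) \<in> Mfrak"
             "\<forall>m. vadd (\<psi> (bas (L m))) (vsc (- lam) (bas (L m))) \<in> Mfrak"
  shows "\<forall>n. (\<exists>c0 r0.
            \<phi> (bas (Y n)) = vadd (vsc lam (bas (Y n))) (vsc c0 (bas (M 0))) \<and>
            \<psi> (bas (Y n)) = vadd (vsc lam (bas (Y n))) (vsc r0 (bas (M 0)))) \<and>
          \<rho>1 (bas (Y n)) = 0 \<and> \<rho>2 (bas (Y n)) = 0 \<and> \<rho>3 (bas (Y n)) = 0 \<and>
          \<theta>1 (bas (Y n)) = 0 \<and> \<theta>2 (bas (Y n)) = 0 \<and> \<theta>3 (bas (Y n)) = 0 \<and>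
          \<rho>3 (bas (L n)) = 0 \<and> \<theta>3 (bas (L n)) = 0"
proof -
  have E: "\<rho>1 x * D1 y g + \<rho>2 x * D2 y g + \<rho>3 x * D3 y g + br (\<phi> x) y g = \<theta>1 y * D1 x g + \<theta>2 y * D2 x g + \<theta>3 y * D3 x g + br x (\<psi> y) g"
    if "x\<in>SV" "y\<in>SV" for x y g
  proof -
    have "f x y g = f x y g" ..
    have a: "f x y g = \<rho>1 x * D1 y g + \<rho>2 x * D2 y g + \<rho>3 x * D3 y g + br (\<phi> x) y g"
      using eq1 that by (simp add: vadd_def vsc_def)
    have b: "f x y g = \<theta>1 y * D1 x g + \<theta>2 y * D2 x g + \<theta>3 y * D3 x g + br x (\<psi> y) g"
      using eq2 that by (simp add: vadd_def vsc_def)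
    show ?thesis using a b by simp
  qed
  have pSV: "\<And>x. x\<in>SV \<Longrightarrow> \<phi> x \<in> SV" using lin(1) by (simp add: lin_map_def)
  have qSV: "\<And>x. x\<in>SV \<Longrightarrow> \<psi> x \<in> SV" using lin(2) by (simp add: lin_map_def)
  have Mf: "vadd (p (bas (L m))) (vsc (- lam) (bas (L m))) (L k) = 0 \<and> vadd (p (bas (L m))) (vsc (- lam) (bas (L m))) (Y k) = 0"
    if "\<forall>m. vadd (p (bas (L m))) (vsc (- lam) (bas (L m))) \<in> Mfrak" for p :: "sv \<Rightarrow> sv" and m k
  proof -
    have "vadd (p (bas (L m))) (vsc (- lam) (bas (L m))) \<in> Mfrak" using that by blast
    thus ?thesis unfolding Mfrak_def by blast
  qed
  have pLL: "\<phi> (bas (L m)) (L k) = (if k = m then lam else 0)" for m k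
    using conjunct1[OF Mf[OF lamh(1), of m k]] by (simp add: vadd_def bdefs)
  have pLY: "\<phi> (bas (L m)) (Y k) = 0" for m k
    using conjunct2[OF Mf[OF lamh(1), of m k]] by (simp add: vadd_def bdefs)
  have qLL: "\<psi> (bas (L m)) (L k) = (if k = m then lam else 0)" for m k
    using conjunct1[OF Mf[OF lamh(2), of m k]] by (simp add: vadd_def bdefs)
  have qLY: "\<psi> (bas (L m)) (Y k) = 0" for m k
    using conjunct2[OF Mf[OF lamh(2), of m k]] by (simp add: vadd_def bdefs)
  note A = partA[OF E pSV qSV pLL pLY]
  note B = partB[OF E pSV qSV qLL qLY]
  have pYL: "\<phi> (bas (Y m)) (L k) = 0" for m k
  proof -
    have "\<phi> (bas (Y m)) (L k) = vadd (vsc lam (bas (Y m))) (vsc (\<phi> (bas (Y m)) (M 0)) (bas (M 0))) (L k)"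
      using conjunct1[OF B[of m]] by (rule fun_cong)
    thus ?thesis by (simp add: vadd_def bdefs)
  qed
  have qYL: "\<psi> (bas (Y m)) (L k) = 0" for m k
  proof -
    have "\<psi> (bas (Y m)) (L k) = vadd (vsc lam (bas (Y m))) (vsc (\<psi> (bas (Y m)) (M 0)) (bas (M 0))) (L k)"
      using conjunct1[OF A[of m]] by (rule fun_cong)
    thus ?thesis by (simp add: vadd_def bdefs)
  qed
  note C = partC[OF E pSV qSV pYL qYL]
  show ?thesis
  proof (intro allI)
    fix n
    have a: "\<psi> (bas (Y n)) = vadd (vsc lam (bas (Y n))) (vsc (\<psi> (bas (Y n)) (M 0)) (bas (M 0)))"
      "\<theta>1 (bas (Y n)) = 0" "\<theta>2 (bas (Y n)) = 0" "\<rho>3 (bas (L n)) = 0"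
      using A[of n] by auto
    have b: "\<phi> (bas (Y n)) = vadd (vsc lam (bas (Y n))) (vsc (\<phi> (bas (Y n)) (M 0)) (bas (M 0)))"
      "\<rho>1 (bas (Y n)) = 0" "\<rho>2 (bas (Y n)) = 0" "\<theta>3 (bas (L n)) = 0"
      using B[of n] by auto
    have c: "\<rho>3 (bas (Y n)) = 0" "\<theta>3 (bas (Y n)) = 0" using C[of n] by auto
    have e: "\<exists>c0 r0.
            \<phi> (bas (Y n)) = vadd (vsc lam (bas (Y n))) (vsc c0 (bas (M 0))) \<and>
            \<psi> (bas (Y n)) = vadd (vsc lam (bas (Y n))) (vsc r0 (bas (M 0)))"
      by (rule exI, rule exI, rule conjI, rule b(1), rule a(1))
    show "(\<exists>c0 r0.
            \<phi> (bas (Y n)) = vadd (vsc lam (bas (Y n))) (vsc c0 (bas (M 0))) \<and>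
            \<psi> (bas (Y n)) = vadd (vsc lam (bas (Y n))) (vsc r0 (bas (M 0)))) \<and>
          \<rho>1 (bas (Y n)) = 0 \<and> \<rho>2 (bas (Y n)) = 0 \<and> \<rho>3 (bas (Y n)) = 0 \<and>
          \<theta>1 (bas (Y n)) = 0 \<and> \<theta>2 (bas (Y n)) = 0 \<and> \<theta>3 (bas (Y n)) = 0 \<and>
          \<rho>3 (bas (L n)) = 0 \<and> \<theta>3 (bas (L n)) = 0"
      using e a(2-4) b(2-4) c by (intro conjI)
  qed
qed
end
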